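(* Let $\mathcal X$ be a finite abelian group, $\mathcal Z$ and $\mathcal M$ finite sets, $P_{XZ}$ a distribution on $\mathcal X\times\mathcal Z$ with marginal $P_Z$, $P_M$ a distribution on $\mathcal M$, $W_{XZ|X}(x,z|x'):=P_{XZ}(x-x',z)$, and $Q_Z$ a distribution on $\mathcal Z$ with $Q_Z(z)>0$ whenever $P_Z(z)>0$. Put $R:=\log|\mathcal X|$ and, for $\theta\in\mathbb R$, \[U(\theta):=\log\sum_{m:P_M(m)>0}P_M(m)^{1-\theta}+\log\sum_{(x,z):P_{XZ}(x,z)>0}P_{XZ}(x,z)^{1-\theta}Q_Z(z)^{\theta}.\] Then for every code $\phi$, \[ \log P_{js}[\phi|P_M,W_{XZ|X}]\ge\sup_{s>0,\ \rho\in\mathbb R,\ \sigma\ge0}\frac{1+s}{s}\Big[-\frac{U(\rho(1+s))}{1+s}+U(\rho)+\log\Big(1-2e^{\frac{U(\rho-\sigma(1-\rho))-(1+\sigma)U(\rho)+\sigma R}{1+\sigma}}\Big)\Big]. \] Moreover, if $\theta_0<1$ satisfies $(1-\theta_0)U'(\theta_0)+U(\theta_0)=R$, then \[ \log P_{js}[\phi|P_M,W_{XZ|X}]\ge\sup_{s>0,\ \theta_0<\rho<1}\frac{1+s}{s}\Big[-\frac{U(\rho(1+s))}{1+s}+U(\rho)+\log\Big(1-2e^{(\rho-\theta_0)U'(\theta_0)+U(\theta_0)-U(\rho)}\Big)\Big]. \]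
   Context: A code $\phi=(\mathsf e,\mathsf d)$ consists of $\mathsf e:\mathcal M\to\mathcal X$ and $\mathsf d:\mathcal X\times\mathcal Z\to\mathcal M$; $P_{js}[\phi|P_M,W]:=\sum_mP_M(m)W(\{y:\mathsf d(y)\ne m\}|\mathsf e(m))$. Convention: $\log t:=-\infty$ for $t\le 0$. Equivalently $U(\theta)=\theta H_{1-\theta}(M)+\theta H_{1-\theta}(P_{XZ}|Q_Z)$ with $H_{1-\theta}(M)=\frac1\theta\log\sum_mP_M(m)^{1-\theta}$ and $H_{1-\theta}(P_{XZ}|Q_Z)=\frac1\theta\log\sum P_{XZ}^{1-\theta}Q_Z^\theta$. *)

theory Defs
  imports "HOL-Analysis.Analysis"
begin

definition elog :: "real \<Rightarrow> ereal" where
  "elog t = (if t > 0 then ereal (ln t) else -\<infinity>)"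

definition Wch :: "('x::ab_group_add \<times> 'z \<Rightarrow> real) \<Rightarrow> 'x \<times> 'z \<Rightarrow> 'x \<Rightarrow> real" where
  "Wch PXZ y x' = PXZ (fst y - x', snd y)"

definition Pjs :: "('m::finite \<Rightarrow> real) \<Rightarrow> ('y::finite \<Rightarrow> 'x \<Rightarrow> real)
                   \<Rightarrow> ('m \<Rightarrow> 'x) \<Rightarrow> ('y \<Rightarrow> 'm) \<Rightarrow> real" where
  "Pjs PM W e d = (\<Sum>m\<in>UNIV. PM m * (\<Sum>y\<in>{y. d y \<noteq> m}. W y (e m)))"

definition Ufun :: "('m::finite \<Rightarrow> real) \<Rightarrow> ('x::finite \<times> 'z::finite \<Rightarrow> real)
                    \<Rightarrow> ('z \<Rightarrow> real) \<Rightarrow> real \<Rightarrow> real" where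
  "Ufun PM PXZ QZ \<theta> =
     ln (\<Sum>m\<in>{m. PM m > 0}. PM m powr (1 - \<theta>))
   + ln (\<Sum>xz\<in>{xz. PXZ xz > 0}. PXZ xz powr (1 - \<theta>) * QZ (snd xz) powr \<theta>)"

end

theory Submission
  imports Defs
begin

lemma holder2:
  fixes a b :: "'w \<Rightarrow> real"
  assumes fin: "finite A" and a0: "\<And>i. i\<in>A \<Longrightarrow> a i \<ge> 0" and b0: "\<And>i. i\<in>A \<Longrightarrow> b i \<ge> 0"
    and al: "\<alpha> > 0" and be: "\<beta> > 0" and ab: "\<alpha> + \<beta> = 1"
  shows "(\<Sum>i\<in>A. a i powr \<alpha> * b i powr \<beta>) \<le> (\<Sum>i\<in>A. a i) powr \<alpha> * (\<Sum>i\<in>A. b i) powr \<beta>"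
proof -
  define SA where "SA = (\<Sum>i\<in>A. a i)"
  define SB where "SB = (\<Sum>i\<in>A. b i)"
  have SA0: "SA \<ge> 0" unfolding SA_def using a0 by (simp add: sum_nonneg)
  have SB0: "SB \<ge> 0" unfolding SB_def using b0 by (simp add: sum_nonneg)
  show ?thesis
  proof (cases "SA = 0 \<or> SB = 0")
    case True
    then have "\<forall>i\<in>A. a i powr \<alpha> * b i powr \<beta> = 0"
      using sum_nonneg_eq_0_iff[OF fin] a0 b0 unfolding SA_def SB_def by auto
    then have "(\<Sum>i\<in>A. a i powr \<alpha> * b i powr \<beta>) = 0" by (intro sum.neutral) auto
    then show ?thesis by simp
  next
    case False
    then have pA: "SA > 0" and pB: "SB > 0" using SA0 SB0 by auto
    have pt: "a i powr \<alpha> * b i powr \<beta> \<le> SA powr \<alpha> * SB powr \<beta> * (\<alpha> * (a i / SA) + \<beta> * (b i / SB))"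
      if i: "i \<in> A" for i
    proof (cases "a i = 0 \<or> b i = 0")
      case True
      have "0 \<le> SA powr \<alpha> * SB powr \<beta> * (\<alpha> * (a i / SA) + \<beta> * (b i / SB))"
        using pA pB al be a0[OF i] b0[OF i] by simp
      then show ?thesis using True by auto
    next
      case False
      then have ai: "a i > 0" and bi: "b i > 0" using a0[OF i] b0[OF i] by auto
      have "(a i / SA) powr \<alpha> * (b i / SB) powr \<beta> \<le> \<alpha> * (a i / SA) + \<beta> * (b i / SB)"
        using Youngs_inequality_0[of \<alpha> \<beta> "a i / SA" "b i / SB"] al be ab ai bi pA pB by simp
      then have "SA powr \<alpha> * SB powr \<beta> * ((a i / SA) powr \<alpha> * (b i / SB) powr \<beta>)
          \<le> SA powr \<alpha> * SB powr \<beta> * (\<alpha> * (a i / SA) + \<beta> * (b i / SB))"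
        using pA pB by (intro mult_left_mono) auto
      moreover have "SA powr \<alpha> * SB powr \<beta> * ((a i / SA) powr \<alpha> * (b i / SB) powr \<beta>) = a i powr \<alpha> * b i powr \<beta>"
        using pA pB ai bi by (simp add: powr_divide)
      ultimately show ?thesis by simp
    qed
    have "(\<Sum>i\<in>A. a i powr \<alpha> * b i powr \<beta>) \<le> (\<Sum>i\<in>A. SA powr \<alpha> * SB powr \<beta> * (\<alpha> * (a i / SA) + \<beta> * (b i / SB)))"
      by (rule sum_mono) (use pt in auto)
    also have "\<dots> = SA powr \<alpha> * SB powr \<beta> * (\<alpha> * ((\<Sum>i\<in>A. a i) / SA) + \<beta> * ((\<Sum>i\<in>A. b i) / SB))"
      by (simp add: sum_distrib_left sum.distrib sum_divide_distrib[symmetric] algebra_simps)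
    also have "\<dots> = SA powr \<alpha> * SB powr \<beta>" using pA pB ab by (simp add: SA_def[symmetric] SB_def[symmetric])
    finally show ?thesis by (simp add: SA_def SB_def)
  qed
qed

lemma thresh_pt:
  fixes t q c \<sigma> :: real
  assumes "t \<ge> 0" "q \<ge> 0" "c > 0" "\<sigma> \<ge> 0" "t > 0 \<Longrightarrow> q > 0"
  shows "t \<le> c * q + t powr (1 + \<sigma>) * (c * q) powr (- \<sigma>)"
proof (cases "t \<le> c * q")
  case True
  then show ?thesis using assms by (smt (verit) mult_nonneg_nonneg powr_ge_zero)
next
  case False
  have "c * q \<ge> 0" using assms by simp
  then have t: "t > 0" using False by simp
  then have q: "q > 0" using assms by simp
  have cq: "c * q > 0" using q assms by simp
  have g1: "(t / (c*q)) powr \<sigma> \<ge> 1" using False cq assms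
    by (intro ge_one_powr_ge_zero) (auto simp: field_simps)
  have "t powr (1 + \<sigma>) * (c * q) powr (- \<sigma>) = t * (t / (c*q)) powr \<sigma>"
  proof -
    have "(t / (c*q)) powr \<sigma> = t powr \<sigma> / (c*q) powr \<sigma>" using t cq by (simp add: powr_divide)
    moreover have "t powr (1 + \<sigma>) = t * t powr \<sigma>" using t by (simp add: powr_add)
    moreover have "(c * q) powr (- \<sigma>) = 1 / (c*q) powr \<sigma>" by (simp add: powr_minus_divide)
    ultimately show ?thesis by simp
  qed
  also have "\<dots> \<ge> t" using g1 t by simp
  finally show ?thesis using cq by simp
qed

lemma key:
  fixes P Q :: "'w::finite \<Rightarrow> real" and Sc :: "'w set" and N s \<rho> \<sigma> :: real
    and S :: "real \<Rightarrow> real"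
  assumes P0: "\<And>w. P w \<ge> 0" and Q0: "\<And>w. Q w \<ge> 0" and PQ: "\<And>w. P w > 0 \<Longrightarrow> Q w > 0"
    and Pex: "\<exists>w. P w > 0" and N: "N > 0" and QSc: "(\<Sum>w\<in>Sc. Q w) \<le> N"
    and s: "s > 0" and \<sigma>: "\<sigma> \<ge> 0"
    and Sdef: "\<And>\<theta>. S \<theta> = (\<Sum>w\<in>UNIV. P w powr (1 - \<theta>) * Q w powr \<theta>)"
  shows "ereal ((1 + s) / s) * (ereal (- ln (S (\<rho> * (1 + s))) / (1 + s) + ln (S \<rho>))
     + elog (1 - 2 * exp ((ln (S (\<rho> - \<sigma> * (1 - \<rho>))) - (1 + \<sigma>) * ln (S \<rho>) + \<sigma> * ln N) / (1 + \<sigma>))))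
     \<le> elog (\<Sum>w\<in>-Sc. P w)"
proof -
  obtain w0 where w0: "P w0 > 0" using Pex by blast
  have Spos: "S \<theta> > 0" for \<theta>
    unfolding Sdef
    by (rule sum_pos2[where i=w0]) (use w0 PQ[OF w0] P0 Q0 in auto)
  define T where "T w = P w powr (1 - \<rho>) * Q w powr \<rho> / S \<rho>" for w
  have T0: "T w \<ge> 0" for w unfolding T_def using Spos[of \<rho>] by simp
  have TP: "P w > 0" if "T w > 0" for w
  proof (rule ccontr)
    assume "\<not> P w > 0" then have "P w = 0" using P0[of w] by simp
    then show False using that unfolding T_def by simp
  qed
  have Tsum: "(\<Sum>w\<in>UNIV. T w) = 1"
    unfolding T_def using Spos[of \<rho>] by (simp add: sum_divide_distrib[symmetric] Sdef[symmetric])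
  define \<tau> where "\<tau> = \<rho> - \<sigma> * (1 - \<rho>)"
  define K where "K = (\<Sum>w\<in>UNIV. T w powr (1 + \<sigma>) * (Q w / N) powr (- \<sigma>))"
  have Kpt: "T w powr (1 + \<sigma>) * (Q w / N) powr (- \<sigma>)
      = N powr \<sigma> / S \<rho> powr (1 + \<sigma>) * (P w powr (1 - \<tau>) * Q w powr \<tau>)" for w
  proof (cases "P w > 0")
    case False
    then have "P w = 0" using P0[of w] by simp
    then show ?thesis unfolding T_def by simp
  next
    case True
    have q: "Q w > 0" using PQ[OF True] .
    have Sr: "S \<rho> > 0" by (rule Spos)
    have Tp: "T w > 0" unfolding T_def using True q Sr by simp
    have lnT: "ln (T w) = (1 - \<rho>) * ln (P w) + \<rho> * ln (Q w) - ln (S \<rho>)"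
      unfolding T_def using True q Sr by (simp add: ln_div ln_mult ln_powr)
    have "ln (T w powr (1 + \<sigma>) * (Q w / N) powr (- \<sigma>)) = (1 + \<sigma>) * ln (T w) - \<sigma> * (ln (Q w) - ln N)"
      using Tp q N by (simp add: ln_div ln_mult ln_powr)
    also have "\<dots> = \<sigma> * ln N - (1 + \<sigma>) * ln (S \<rho>) + (1 - \<tau>) * ln (P w) + \<tau> * ln (Q w)"
      unfolding lnT \<tau>_def by (simp add: algebra_simps)
    also have "\<dots> = ln (N powr \<sigma> / S \<rho> powr (1 + \<sigma>) * (P w powr (1 - \<tau>) * Q w powr \<tau>))"
      using True q N Sr by (simp add: ln_div ln_mult ln_powr)
    finally show ?thesis
      using Tp q N Sr True by (subst (asm) ln_inj_iff) auto
  qed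
  have Kval: "K = N powr \<sigma> / S \<rho> powr (1 + \<sigma>) * S \<tau>"
    unfolding K_def Kpt Sdef[of \<tau>] by (simp only: sum_distrib_left[symmetric])
  have Kpos: "K > 0" unfolding Kval using N Spos[of \<rho>] Spos[of \<tau>] by (simp add: divide_pos_pos)
  define E where "E = (ln (S \<tau>) - (1 + \<sigma>) * ln (S \<rho>) + \<sigma> * ln N) / (1 + \<sigma>)"
  have lnK: "ln K = ln (S \<tau>) - (1 + \<sigma>) * ln (S \<rho>) + \<sigma> * ln N"
    unfolding Kval using N Spos[of \<rho>] Spos[of \<tau>] by (simp add: ln_div ln_mult ln_powr)
  define c where "c = K powr (1 / (1 + \<sigma>))"
  have cpos: "c > 0" unfolding c_def using Kpos by simp
  have cE: "c = exp E" unfolding c_def E_def using Kpos \<sigma> by (simp add: powr_def lnK)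
  have ck: "c powr (- \<sigma>) * K = c"
  proof -
    have "c powr (- \<sigma>) * K = K powr (- \<sigma> / (1 + \<sigma>)) * K powr 1"
      unfolding c_def using Kpos by (simp add: powr_powr)
    also have "\<dots> = K powr (1 / (1 + \<sigma>))"
    proof -
      have "K powr (- \<sigma> / (1 + \<sigma>)) * K powr 1 = K powr (- \<sigma> / (1 + \<sigma>) + 1)"
        by (simp only: powr_add)
      moreover have "- \<sigma> / (1 + \<sigma>) + 1 = 1 / (1 + \<sigma>)" using \<sigma> by (simp add: field_simps)
      ultimately show ?thesis by simp
    qed
    finally show ?thesis unfolding c_def .
  qed
  have succ: "(\<Sum>w\<in>Sc. T w) \<le> 2 * exp E"
  proof -
    have pm: "(c * (Q w / N)) powr (- \<sigma>) = c powr (- \<sigma>) * (Q w / N) powr (- \<sigma>)" for w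
      using cpos N Q0[of w] by (intro powr_mult)
    have "(\<Sum>w\<in>Sc. T w) \<le> (\<Sum>w\<in>Sc. c * (Q w / N) + T w powr (1 + \<sigma>) * (c * (Q w / N)) powr (- \<sigma>))"
      by (rule sum_mono, rule thresh_pt) (use T0 Q0 N cpos \<sigma> TP PQ in auto)
    also have "\<dots> = c * ((\<Sum>w\<in>Sc. Q w) / N) + c powr (- \<sigma>) * (\<Sum>w\<in>Sc. T w powr (1 + \<sigma>) * (Q w / N) powr (- \<sigma>))"
      unfolding pm using cpos N Q0 by (simp add: sum.distrib sum_distrib_left sum_divide_distrib mult_ac)
    also have "\<dots> \<le> c * 1 + c powr (- \<sigma>) * K"
    proof (intro add_mono mult_left_mono)
      show "(\<Sum>w\<in>Sc. Q w) / N \<le> 1" using QSc N by simp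
      show "(\<Sum>w\<in>Sc. T w powr (1 + \<sigma>) * (Q w / N) powr (- \<sigma>)) \<le> K"
        unfolding K_def by (rule sum_mono2) auto
    qed (use cpos in auto)
    also have "\<dots> = 2 * exp E" using ck cE by simp
    finally show ?thesis .
  qed
  have errT: "(\<Sum>w\<in>-Sc. T w) \<ge> 1 - 2 * exp E"
  proof -
    have "(\<Sum>w\<in>UNIV. T w) = (\<Sum>w\<in>Sc. T w) + (\<Sum>w\<in>-Sc. T w)"
      by (subst sum.union_disjoint[symmetric]) (auto intro: sum.cong)
    then show ?thesis using Tsum succ by simp
  qed
  define \<alpha> where "\<alpha> = s / (1 + s)"
  define \<beta> where "\<beta> = 1 / (1 + s)"
  define b where "b w = P w powr (1 - \<rho> * (1 + s)) * Q w powr (\<rho> * (1 + s))" for w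
  have ptH: "P w powr (1 - \<rho>) * Q w powr \<rho> = P w powr \<alpha> * b w powr \<beta>" for w
  proof (cases "P w > 0")
    case False
    then have "P w = 0" using P0[of w] by simp
    then show ?thesis unfolding \<alpha>_def using s by simp
  next
    case True
    have q: "Q w > 0" using PQ[OF True] .
    have e1: "\<alpha> + (1 - \<rho> * (1 + s)) * \<beta> = 1 - \<rho>" unfolding \<alpha>_def \<beta>_def
    proof -
      have "(1 - \<rho> * (1 + s)) * (1 / (1 + s)) = 1/(1+s) - \<rho>" using s by (simp add: field_simps)
      moreover have "s/(1+s) + 1/(1+s) = 1" using s by (simp add: add_divide_distrib[symmetric])
      ultimately show "s / (1 + s) + (1 - \<rho> * (1 + s)) * (1 / (1 + s)) = 1 - \<rho>" by simp
    qed
    have e2: "\<rho> * (1 + s) * \<beta> = \<rho>" unfolding \<beta>_def using s by (simp add: field_simps)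
    have "P w powr \<alpha> * b w powr \<beta> = P w powr (\<alpha> + (1 - \<rho> * (1 + s)) * \<beta>) * Q w powr (\<rho> * (1 + s) * \<beta>)"
      unfolding b_def using True q by (simp add: powr_mult powr_powr powr_add)
    then show ?thesis using e1 e2 by simp
  qed
  define PA where "PA = (\<Sum>w\<in>-Sc. P w)"
  have PA0: "PA \<ge> 0" unfolding PA_def using P0 by (simp add: sum_nonneg)
  have bsum: "(\<Sum>w\<in>-Sc. b w) \<le> S (\<rho> * (1 + s))"
    unfolding Sdef b_def by (rule sum_mono2) (use P0 Q0 in auto)
  have hold: "(\<Sum>w\<in>-Sc. T w) \<le> PA powr \<alpha> * S (\<rho> * (1 + s)) powr \<beta> / S \<rho>"
  proof -
    have "(\<Sum>w\<in>-Sc. T w) = (\<Sum>w\<in>-Sc. P w powr \<alpha> * b w powr \<beta>) / S \<rho>"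
      unfolding T_def ptH by (simp add: sum_divide_distrib)
    also have "\<dots> \<le> (PA powr \<alpha> * (\<Sum>w\<in>-Sc. b w) powr \<beta>) / S \<rho>"
      unfolding PA_def using Spos[of \<rho>]
      by (intro divide_right_mono holder2) (use P0 s in \<open>auto simp: b_def \<alpha>_def \<beta>_def field_simps\<close>)
    also have "\<dots> \<le> PA powr \<alpha> * S (\<rho> * (1 + s)) powr \<beta> / S \<rho>"
      using Spos[of \<rho>] bsum s PA0
      by (intro divide_right_mono mult_left_mono powr_mono2) (auto simp: \<beta>_def b_def intro!: sum_nonneg)
    finally show ?thesis .
  qed
  show ?thesis
  proof (cases "1 - 2 * exp E \<le> 0")
    case True
    then show ?thesis using s unfolding E_def \<tau>_def elog_def by simp
  next
    case False
    define L where "L = 1 - 2 * exp E"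
    have L: "L > 0" using False L_def by simp
    have TA: "(\<Sum>w\<in>-Sc. T w) \<ge> L" using errT L_def by simp
    have PApos: "PA > 0"
    proof (rule ccontr)
      assume "\<not> PA > 0" then have "PA = 0" using PA0 by simp
      then show False using hold TA L by simp
    qed
    have "ln L \<le> ln (PA powr \<alpha> * S (\<rho> * (1 + s)) powr \<beta> / S \<rho>)"
      using TA hold L by (intro ln_mono) auto
    also have "\<dots> = \<alpha> * ln PA + \<beta> * ln (S (\<rho> * (1 + s))) - ln (S \<rho>)"
      using PApos Spos[of \<rho>] Spos[of "\<rho> * (1 + s)"] by (simp add: ln_div ln_mult ln_powr)
    finally have lnL: "ln L \<le> \<alpha> * ln PA + \<beta> * ln (S (\<rho> * (1 + s))) - ln (S \<rho>)" .
    define X where "X = - ln (S (\<rho> * (1 + s))) / (1 + s) + ln (S \<rho>) + ln L"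
    have "X \<le> s / (1 + s) * ln PA" using lnL unfolding X_def \<alpha>_def \<beta>_def by (simp add: field_simps)
    then have "(1 + s) / s * X \<le> (1 + s) / s * (s / (1 + s) * ln PA)"
      using s by (intro mult_left_mono) auto
    also have "\<dots> = ln PA"
    proof -
      have "(1 + s) / s * (s / (1 + s)) = 1" using s by simp
      then show ?thesis by (metis mult.assoc mult_1)
    qed
    finally have real: "(1 + s) / s * X \<le> ln PA" .
    have "elog L = ereal (ln L)" using L by (simp add: elog_def)
    moreover have "elog PA = ereal (ln PA)" using PApos by (simp add: elog_def)
    ultimately show ?thesis using real
      unfolding PA_def[symmetric] L_def[symmetric] E_def[symmetric] \<tau>_def[symmetric] X_def
      by simp
  qed
qed

theorem mainTheorem8:
  fixes PXZ :: "'x::{ab_group_add, finite} \<times> 'z::finite \<Rightarrow> real"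
    and PZ QZ :: "'z \<Rightarrow> real"
    and PM :: "'m::finite \<Rightarrow> real"
    and e :: "'m \<Rightarrow> 'x" and d :: "'x \<times> 'z \<Rightarrow> 'm"
  assumes PXZ_nonneg: "\<And>xz. PXZ xz \<ge> 0" and PXZ_sum: "(\<Sum>xz\<in>UNIV. PXZ xz) = 1"
    and PZ_marg: "\<And>z. PZ z = (\<Sum>x\<in>UNIV. PXZ (x, z))"
    and PM_nonneg: "\<And>m. PM m \<ge> 0" and PM_sum: "(\<Sum>m\<in>UNIV. PM m) = 1"
    and QZ_nonneg: "\<And>z. QZ z \<ge> 0" and QZ_sum: "(\<Sum>z\<in>UNIV. QZ z) = 1"
    and QZ_pos: "\<And>z. PZ z > 0 \<Longrightarrow> QZ z > 0"
  defines "R \<equiv> ln (real CARD('x))"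
    and "U \<equiv> Ufun PM PXZ QZ"
    and "P \<equiv> Pjs PM (Wch PXZ) e d"
  shows "Sup {ereal ((1 + s) / s) *
              (ereal (- U (\<rho> * (1 + s)) / (1 + s) + U \<rho>)
               + elog (1 - 2 * exp ((U (\<rho> - \<sigma> * (1 - \<rho>)) - (1 + \<sigma>) * U \<rho> + \<sigma> * R)
                                    / (1 + \<sigma>))))
             | s \<rho> \<sigma>. s > 0 \<and> \<sigma> \<ge> 0} \<le> elog P
      \<and> (\<forall>\<theta>0. \<theta>0 < 1 \<and> (1 - \<theta>0) * deriv U \<theta>0 + U \<theta>0 = R \<longrightarrow>
         Sup {ereal ((1 + s) / s) *
              (ereal (- U (\<rho> * (1 + s)) / (1 + s) + U \<rho>)
               + elog (1 - 2 * exp ((\<rho> - \<theta>0) * deriv U \<theta>0 + U \<theta>0 - U \<rho>)))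
             | s \<rho>. s > 0 \<and> \<theta>0 < \<rho> \<and> \<rho> < 1} \<le> elog P)"
proof -
  define Pw :: "'m \<times> ('x \<times> 'z) \<Rightarrow> real" where "Pw = (\<lambda>(m, xz). PM m * PXZ xz)"
  define Qw :: "'m \<times> ('x \<times> 'z) \<Rightarrow> real" where "Qw = (\<lambda>(m, xz). QZ (snd xz))"
  define Sc :: "('m \<times> ('x \<times> 'z)) set" where "Sc = {(m, xz). d (e m + fst xz, snd xz) = m}"
  define N where "N = real CARD('x)"
  define S where "S \<theta> = (\<Sum>w\<in>UNIV. Pw w powr (1 - \<theta>) * Qw w powr \<theta>)" for \<theta>
  have N: "N > 0" unfolding N_def by simp
  have Pw0: "Pw w \<ge> 0" for w unfolding Pw_def using PM_nonneg PXZ_nonneg by (auto split: prod.splits)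
  have Qw0: "Qw w \<ge> 0" for w unfolding Qw_def using QZ_nonneg by (auto split: prod.splits)
  have PQ: "Qw w > 0" if "Pw w > 0" for w
  proof -
    obtain m x z where w: "w = (m, (x, z))" by (cases w) auto
    have "PM m * PXZ (x, z) > 0" using that w Pw_def by simp
    then have px: "PXZ (x, z) > 0" using PM_nonneg[of m] PXZ_nonneg[of "(x,z)"]
      by (metis less_eq_real_def mult_not_zero)
    have "PZ z > 0" unfolding PZ_marg
      by (rule sum_pos2[where i=x]) (use px PXZ_nonneg in auto)
    then show ?thesis using QZ_pos w Qw_def by simp
  qed
  have Pex: "\<exists>w. Pw w > 0"
  proof -
    obtain m where m: "PM m > 0"
    proof (rule ccontr)
      assume "\<not> thesis" then have "\<forall>m. PM m \<le> 0" using that by (meson not_le)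
      then have "(\<Sum>m\<in>UNIV. PM m) \<le> 0" by (simp add: sum_nonpos)
      then show False using PM_sum by simp
    qed
    obtain xz where xz: "PXZ xz > 0"
    proof (rule ccontr)
      assume "\<not> thesis" then have "\<forall>m. PXZ m \<le> 0" using that by (meson not_le)
      then have "(\<Sum>m\<in>UNIV. PXZ m) \<le> 0" by (intro sum_nonpos) blast
      then show False using PXZ_sum by simp
    qed
    have "Pw (m, xz) > 0" using m xz Pw_def by simp
    then show ?thesis by blast
  qed
  have UisS: "U \<theta> = ln (S \<theta>)" for \<theta>
  proof -
    have s1: "(\<Sum>m\<in>{m. PM m > 0}. PM m powr (1 - \<theta>)) = (\<Sum>m\<in>UNIV. PM m powr (1 - \<theta>))"
      by (rule sum.mono_neutral_left) (use PM_nonneg in \<open>auto simp: not_less order.antisym\<close>)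
    have s2: "(\<Sum>xz\<in>{xz. PXZ xz > 0}. PXZ xz powr (1 - \<theta>) * QZ (snd xz) powr \<theta>)
        = (\<Sum>xz\<in>UNIV. PXZ xz powr (1 - \<theta>) * QZ (snd xz) powr \<theta>)"
      by (rule sum.mono_neutral_left) (use PXZ_nonneg in \<open>auto simp: not_less order.antisym\<close>)
    have "S \<theta> = (\<Sum>m\<in>UNIV. \<Sum>xz\<in>UNIV. PM m powr (1 - \<theta>) * (PXZ xz powr (1 - \<theta>) * QZ (snd xz) powr \<theta>))"
      unfolding sum.cartesian_product UNIV_Times_UNIV S_def Pw_def Qw_def
      by (rule sum.cong) (auto simp: powr_mult PM_nonneg PXZ_nonneg)
    also have "\<dots> = (\<Sum>m\<in>UNIV. PM m powr (1 - \<theta>)) * (\<Sum>xz\<in>UNIV. PXZ xz powr (1 - \<theta>) * QZ (snd xz) powr \<theta>)"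
      by (simp add: sum_product)
    finally have Sprod: "S \<theta> = (\<Sum>m\<in>UNIV. PM m powr (1 - \<theta>)) * (\<Sum>xz\<in>UNIV. PXZ xz powr (1 - \<theta>) * QZ (snd xz) powr \<theta>)" .
    obtain m xz where m: "PM m > 0" and xz: "PXZ xz > 0" using Pex unfolding Pw_def
      by (auto split: prod.splits simp: zero_less_mult_iff) (use PM_nonneg PXZ_nonneg in \<open>meson not_le\<close>)+
    have qxz: "QZ (snd xz) > 0" using PQ[of "(m, xz)"] m xz unfolding Pw_def Qw_def by simp
    have a: "(\<Sum>m\<in>UNIV. PM m powr (1 - \<theta>)) > 0"
      by (rule sum_pos2[where i=m]) (use m in auto)
    have b: "(\<Sum>xz\<in>UNIV. PXZ xz powr (1 - \<theta>) * QZ (snd xz) powr \<theta>) > 0"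
      by (rule sum_pos2[where i=xz]) (use xz qxz in auto)
    show ?thesis unfolding U_def Ufun_def s1 s2 Sprod using a b by (simp add: ln_mult)
  qed
  have Ueq: "U = (\<lambda>\<theta>. ln (S \<theta>))" using UisS by auto
  have shiftsum: "(\<Sum>y\<in>UNIV. g y) = (\<Sum>xz\<in>UNIV. g (a + fst xz, snd xz))" for g :: "'x \<times> 'z \<Rightarrow> real" and a
    by (rule sum.reindex_bij_witness[where j="\<lambda>y. (fst y - a, snd y)" and i="\<lambda>xz. (a + fst xz, snd xz)"]) auto
  have F2: "P = (\<Sum>w\<in>-Sc. Pw w)"
  proof -
    have "P = (\<Sum>m\<in>UNIV. \<Sum>y\<in>UNIV. if d y \<noteq> m then PM m * PXZ (fst y - e m, snd y) else 0)"
      unfolding P_def Pjs_def Wch_def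
      by (simp add: sum_distrib_left sum.inter_filter[symmetric] if_distrib cong: if_cong)
    also have "\<dots> = (\<Sum>m\<in>UNIV. \<Sum>xz\<in>UNIV. if d (e m + fst xz, snd xz) \<noteq> m then PM m * PXZ xz else 0)"
    proof (rule sum.cong[OF refl])
      fix m show "(\<Sum>y\<in>UNIV. if d y \<noteq> m then PM m * PXZ (fst y - e m, snd y) else 0) = (\<Sum>xz\<in>UNIV. if d (e m + fst xz, snd xz) \<noteq> m then PM m * PXZ xz else 0)"
        by (subst shiftsum[where a="e m"]) (auto intro!: sum.cong)
    qed
    also have "\<dots> = (\<Sum>w\<in>UNIV. if w \<in> Sc then 0 else Pw w)"
      unfolding Sc_def Pw_def
      by (simp add: sum.cartesian_product flip: UNIV_Times_UNIV) (auto intro!: sum.cong)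
    also have "\<dots> = (\<Sum>w\<in>-Sc. Pw w)"
      by (simp add: sum.If_cases Compl_eq_Diff_UNIV)
    finally show ?thesis .
  qed
  have F3: "(\<Sum>w\<in>Sc. Qw w) \<le> N"
  proof -
    have "(\<Sum>w\<in>Sc. Qw w) = (\<Sum>w\<in>UNIV. if w \<in> Sc then Qw w else 0)"
      by (simp add: sum.If_cases)
    also have "\<dots> = (\<Sum>m\<in>UNIV. \<Sum>xz\<in>UNIV. if d (e m + fst xz, snd xz) = m then QZ (snd xz) else 0)"
      unfolding Sc_def Qw_def
      by (simp add: sum.cartesian_product flip: UNIV_Times_UNIV) (auto intro!: sum.cong)
    also have "\<dots> = (\<Sum>m\<in>UNIV. \<Sum>y\<in>UNIV. if d y = m then QZ (snd y) else 0)"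
    proof (rule sum.cong[OF refl])
      fix m show "(\<Sum>xz\<in>UNIV. if d (e m + fst xz, snd xz) = m then QZ (snd xz) else 0) = (\<Sum>y\<in>UNIV. if d y = m then QZ (snd y) else 0)"
        by (subst shiftsum[where a="e m"]) (auto intro!: sum.cong)
    qed
    also have "\<dots> = (\<Sum>y\<in>UNIV. \<Sum>m\<in>UNIV. if d y = m then QZ (snd y) else 0)"
      by (rule sum.swap)
    also have "\<dots> = (\<Sum>y\<in>(UNIV::('x \<times> 'z) set). QZ (snd y))"
      by (simp add: eq_commute[of "d _"])
    also have "\<dots> = (\<Sum>x\<in>(UNIV::'x set). \<Sum>z\<in>UNIV. QZ z)"
      by (simp only: sum.cartesian_product UNIV_Times_UNIV) (simp add: case_prod_beta)
    also have "\<dots> = N" using QZ_sum N_def by simp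
    finally show ?thesis by simp
  qed
  have R: "R = ln N" unfolding R_def N_def ..
  have part1: "Sup {ereal ((1 + s) / s) *
              (ereal (- U (\<rho> * (1 + s)) / (1 + s) + U \<rho>)
               + elog (1 - 2 * exp ((U (\<rho> - \<sigma> * (1 - \<rho>)) - (1 + \<sigma>) * U \<rho> + \<sigma> * R)
                                    / (1 + \<sigma>))))
             | s \<rho> \<sigma>. s > 0 \<and> \<sigma> \<ge> 0} \<le> elog P"
  proof (rule Sup_least)
    fix x assume "x \<in> {ereal ((1 + s) / s) *
              (ereal (- U (\<rho> * (1 + s)) / (1 + s) + U \<rho>)
               + elog (1 - 2 * exp ((U (\<rho> - \<sigma> * (1 - \<rho>)) - (1 + \<sigma>) * U \<rho> + \<sigma> * R)
                                    / (1 + \<sigma>))))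
             | s \<rho> \<sigma>. s > 0 \<and> \<sigma> \<ge> 0}"
    then obtain s \<rho> \<sigma> where x: "x = ereal ((1 + s) / s) *
              (ereal (- U (\<rho> * (1 + s)) / (1 + s) + U \<rho>)
               + elog (1 - 2 * exp ((U (\<rho> - \<sigma> * (1 - \<rho>)) - (1 + \<sigma>) * U \<rho> + \<sigma> * R)
                                    / (1 + \<sigma>))))" and s: "s > 0" and \<sigma>: "\<sigma> \<ge> 0" by blast
    show "x \<le> elog P" unfolding x Ueq R F2
      by (rule key[of Pw Qw N Sc s \<sigma> S \<rho>, OF Pw0 Qw0 PQ Pex N F3 s \<sigma> S_def])

  qed
  show ?thesis
  proof (intro conjI allI impI)
    show "Sup {ereal ((1 + s) / s) *
              (ereal (- U (\<rho> * (1 + s)) / (1 + s) + U \<rho>)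
               + elog (1 - 2 * exp ((U (\<rho> - \<sigma> * (1 - \<rho>)) - (1 + \<sigma>) * U \<rho> + \<sigma> * R)
                                    / (1 + \<sigma>))))
             | s \<rho> \<sigma>. s > 0 \<and> \<sigma> \<ge> 0} \<le> elog P" by (rule part1)
    fix \<theta>0 assume h: "\<theta>0 < 1 \<and> (1 - \<theta>0) * deriv U \<theta>0 + U \<theta>0 = R"
    define D where "D = deriv U \<theta>0"
    have t0: "\<theta>0 < 1" and RD: "R = (1 - \<theta>0) * D + U \<theta>0" using h D_def by auto
    have sub: "{ereal ((1 + s) / s) *
              (ereal (- U (\<rho> * (1 + s)) / (1 + s) + U \<rho>)
               + elog (1 - 2 * exp ((\<rho> - \<theta>0) * deriv U \<theta>0 + U \<theta>0 - U \<rho>)))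
             | s \<rho>. s > 0 \<and> \<theta>0 < \<rho> \<and> \<rho> < 1} \<subseteq> {ereal ((1 + s) / s) *
              (ereal (- U (\<rho> * (1 + s)) / (1 + s) + U \<rho>)
               + elog (1 - 2 * exp ((U (\<rho> - \<sigma> * (1 - \<rho>)) - (1 + \<sigma>) * U \<rho> + \<sigma> * R)
                                    / (1 + \<sigma>))))
             | s \<rho> \<sigma>. s > 0 \<and> \<sigma> \<ge> 0}"
    proof
      fix x assume "x \<in> {ereal ((1 + s) / s) *
              (ereal (- U (\<rho> * (1 + s)) / (1 + s) + U \<rho>)
               + elog (1 - 2 * exp ((\<rho> - \<theta>0) * deriv U \<theta>0 + U \<theta>0 - U \<rho>)))
             | s \<rho>. s > 0 \<and> \<theta>0 < \<rho> \<and> \<rho> < 1}"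
      then obtain s \<rho> where x: "x = ereal ((1 + s) / s) *
              (ereal (- U (\<rho> * (1 + s)) / (1 + s) + U \<rho>)
               + elog (1 - 2 * exp ((\<rho> - \<theta>0) * deriv U \<theta>0 + U \<theta>0 - U \<rho>)))"
        and s: "s > 0" and r1: "\<theta>0 < \<rho>" and r2: "\<rho> < 1" by blast
      define \<sigma> where "\<sigma> = (\<rho> - \<theta>0) / (1 - \<rho>)"
      have \<sigma>: "\<sigma> \<ge> 0" unfolding \<sigma>_def using r1 r2 by simp
      have tau: "\<rho> - \<sigma> * (1 - \<rho>) = \<theta>0" unfolding \<sigma>_def using r2 by simp
      have ops: "1 + \<sigma> = (1 - \<theta>0) / (1 - \<rho>)" unfolding \<sigma>_def using r2 by (simp add: field_simps)
      have eq: "(U (\<rho> - \<sigma> * (1 - \<rho>)) - (1 + \<sigma>) * U \<rho> + \<sigma> * R) / (1 + \<sigma>)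
          = (\<rho> - \<theta>0) * deriv U \<theta>0 + U \<theta>0 - U \<rho>"
      proof -
        have k: "\<sigma> * (1 - \<theta>0) = (1 + \<sigma>) * (\<rho> - \<theta>0)"
          unfolding ops unfolding \<sigma>_def using r2 by (simp add: field_simps)
        have "U \<theta>0 - (1 + \<sigma>) * U \<rho> + \<sigma> * ((1 - \<theta>0) * D + U \<theta>0)
            = (1 + \<sigma>) * ((\<rho> - \<theta>0) * D + U \<theta>0 - U \<rho>)"
        proof -
          have "\<sigma> * ((1 - \<theta>0) * D) = (1 + \<sigma>) * (\<rho> - \<theta>0) * D" using k by (metis mult.assoc)
          then show ?thesis by (simp add: algebra_simps)
        qed
        then show ?thesis unfolding tau D_def[symmetric] RD using \<sigma> by simp
      qed
      show "x \<in> {ereal ((1 + s) / s) *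
              (ereal (- U (\<rho> * (1 + s)) / (1 + s) + U \<rho>)
               + elog (1 - 2 * exp ((U (\<rho> - \<sigma> * (1 - \<rho>)) - (1 + \<sigma>) * U \<rho> + \<sigma> * R)
                                    / (1 + \<sigma>))))
             | s \<rho> \<sigma>. s > 0 \<and> \<sigma> \<ge> 0}"
        unfolding x using s \<sigma> eq by (intro CollectI exI[of _ s] exI[of _ \<rho>] exI[of _ \<sigma>]) simp
    qed
    show "Sup {ereal ((1 + s) / s) *
              (ereal (- U (\<rho> * (1 + s)) / (1 + s) + U \<rho>)
               + elog (1 - 2 * exp ((\<rho> - \<theta>0) * deriv U \<theta>0 + U \<theta>0 - U \<rho>)))
             | s \<rho>. s > 0 \<and> \<theta>0 < \<rho> \<and> \<rho> < 1} \<le> elog P"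
      using Sup_subset_mono[OF sub] part1 by (rule order.trans)
  qed
qed

end
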